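(* Let $\pi$ be a projective plane of order $q$ and let $a,b$ be positive integers. The complete bipartite graph $K_{a,b}$ embeds in $\pi$ if and only if either $a,b\le q$, or $\{a,b\}=\{1,q+1\}$ (i.e. the graph is $K_{1,q+1}$).
   Context: $K_{a,b}$ is the complete bipartite graph with classes of sizes $a$ and $b$ (so $K_{a,b}\cong K_{b,a}$). A finite projective plane of order $q$ has $q^2+q+1$ points and lines, $q+1$ points on each line and $q+1$ lines through each point; any two distinct points lie on a unique line and any two lines meet in a unique point. An embedding of a simple graph $G=(V,E)$ into a projective plane is an injective map $\phi$ from $V$ to the points such that the induced map sending an edge $ab$ to the line through $\phi(a),\phi(b)$ is injective on $E$. *)

theory Defs
  imports Main
begin

definition projective_plane :: "'p set \<Rightarrow> 'p set set \<Rightarrow> nat \<Rightarrow> bool" where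
  "projective_plane P L q \<longleftrightarrow>
     q \<ge> 2 \<and> finite P \<and>
     card P = q^2 + q + 1 \<and> card L = q^2 + q + 1 \<and>
     (\<forall>l\<in>L. l \<subseteq> P \<and> card l = q + 1) \<and>
     (\<forall>x\<in>P. card {l\<in>L. x \<in> l} = q + 1) \<and>
     (\<forall>x\<in>P. \<forall>y\<in>P. x \<noteq> y \<longrightarrow> (\<exists>!l. l \<in> L \<and> x \<in> l \<and> y \<in> l)) \<and>
     (\<forall>l\<in>L. \<forall>m\<in>L. l \<noteq> m \<longrightarrow> (\<exists>!x. x \<in> P \<and> x \<in> l \<and> x \<in> m))"

definition line_through :: "'p set set \<Rightarrow> 'p set \<Rightarrow> 'p set" where
  "line_through L S = (THE l. l \<in> L \<and> S \<subseteq> l)"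

text \<open>Embedding of a simple graph (V,E), edges being 2-element subsets of V.\<close>
definition graph_embeds :: "'v set \<Rightarrow> 'v set set \<Rightarrow> 'p set \<Rightarrow> 'p set set \<Rightarrow> bool" where
  "graph_embeds V E P L \<longleftrightarrow>
     (\<exists>\<phi>. \<phi> ` V \<subseteq> P \<and> inj_on \<phi> V \<and> inj_on (\<lambda>e. line_through L (\<phi> ` e)) E)"

definition Kab_vertices :: "nat \<Rightarrow> nat \<Rightarrow> (nat + nat) set" where
  "Kab_vertices a b = Inl ` {..<a} \<union> Inr ` {..<b}"

definition Kab_edges :: "nat \<Rightarrow> nat \<Rightarrow> (nat + nat) set set" where
  "Kab_edges a b = {{Inl i, Inr j} | i j. i < a \<and> j < b}"

end

theory Submission
  imports Defs
begin

lemma ppD: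
  assumes "projective_plane P L q"
  shows "q \<ge> 2" "finite P" "card P = q^2 + q + 1" "card L = q^2 + q + 1"
   "\<And>l. l\<in>L \<Longrightarrow> l \<subseteq> P" "\<And>l. l\<in>L \<Longrightarrow> card l = q + 1"
   "\<And>x. x\<in>P \<Longrightarrow> card {l\<in>L. x \<in> l} = q + 1"
   "\<And>x y. x\<in>P \<Longrightarrow> y\<in>P \<Longrightarrow> x \<noteq> y \<Longrightarrow> (\<exists>!l. l \<in> L \<and> x \<in> l \<and> y \<in> l)"
   "\<And>l m. l\<in>L \<Longrightarrow> m\<in>L \<Longrightarrow> l \<noteq> m \<Longrightarrow> (\<exists>!x. x \<in> P \<and> x \<in> l \<and> x \<in> m)"
proof -
  have d: "q \<ge> 2 \<and> finite P \<and>
     card P = q^2 + q + 1 \<and> card L = q^2 + q + 1 \<and>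
     (\<forall>l\<in>L. l \<subseteq> P \<and> card l = q + 1) \<and>
     (\<forall>x\<in>P. card {l\<in>L. x \<in> l} = q + 1) \<and>
     (\<forall>x\<in>P. \<forall>y\<in>P. x \<noteq> y \<longrightarrow> (\<exists>!l. l \<in> L \<and> x \<in> l \<and> y \<in> l)) \<and>
     (\<forall>l\<in>L. \<forall>m\<in>L. l \<noteq> m \<longrightarrow> (\<exists>!x. x \<in> P \<and> x \<in> l \<and> x \<in> m))"
    using assms unfolding projective_plane_def by assumption
  show "q \<ge> 2" "finite P" "card P = q^2 + q + 1" "card L = q^2 + q + 1" using d by simp_all
  show "\<And>l. l\<in>L \<Longrightarrow> l \<subseteq> P" "\<And>l. l\<in>L \<Longrightarrow> card l = q + 1" using d[THEN conjunct2, THEN conjunct2, THEN conjunct2, THEN conjunct2, THEN conjunct1] by simp_all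
  show "\<And>x. x\<in>P \<Longrightarrow> card {l\<in>L. x \<in> l} = q + 1" using d[THEN conjunct2, THEN conjunct2, THEN conjunct2, THEN conjunct2, THEN conjunct2, THEN conjunct1] by simp
  show "\<And>x y. x\<in>P \<Longrightarrow> y\<in>P \<Longrightarrow> x \<noteq> y \<Longrightarrow> (\<exists>!l. l \<in> L \<and> x \<in> l \<and> y \<in> l)" 
    using d[THEN conjunct2, THEN conjunct2, THEN conjunct2, THEN conjunct2, THEN conjunct2, THEN conjunct2, THEN conjunct1, rule_format] by this 
  show "\<And>l m. l\<in>L \<Longrightarrow> m\<in>L \<Longrightarrow> l \<noteq> m \<Longrightarrow> (\<exists>!x. x \<in> P \<and> x \<in> l \<and> x \<in> m)"
    using d[THEN conjunct2, THEN conjunct2, THEN conjunct2, THEN conjunct2, THEN conjunct2, THEN conjunct2, THEN conjunct2, rule_format] by this 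
qed

lemma pp_line_eq:
  assumes pp: "projective_plane P L q" and "x\<in>P" "y\<in>P" "x\<noteq>y" "l\<in>L" "x\<in>l" "y\<in>l"
  shows "line_through L {x,y} = l"
proof -
  have u: "\<exists>!l. l \<in> L \<and> x \<in> l \<and> y \<in> l" using ppD(8)[OF pp assms(2-4)] .
  show ?thesis unfolding line_through_def
  proof (rule the_equality)
    show "l \<in> L \<and> {x,y} \<subseteq> l" using assms by auto
    fix l' assume "l' \<in> L \<and> {x,y} \<subseteq> l'" then show "l' = l" using u assms by auto
  qed
qed

lemma pp_line:
  assumes pp: "projective_plane P L q" and "x\<in>P" "y\<in>P" "x\<noteq>y"
  shows "line_through L {x,y} \<in> L \<and> x \<in> line_through L {x,y} \<and> y \<in> line_through L {x,y}"
proof -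
  obtain l where "l \<in> L" "x\<in>l" "y\<in>l" using ppD(8)[OF pp assms(2-4)] by blast
  then show ?thesis using pp_line_eq[OF pp assms(2-4)] by simp
qed

lemma pp_meet:
  assumes pp: "projective_plane P L q" and "l\<in>L" "m\<in>L" "l\<noteq>m" "x\<in>P" "x\<in>l" "x\<in>m" "y\<in>P" "y\<in>l" "y\<in>m"
  shows "x = y"
  using ppD(9)[OF pp assms(2-4)] assms(5-) by blast

lemma pp_finL: "projective_plane P L q \<Longrightarrow> finite L"
  using ppD(4) by (metis card.infinite add_is_0 one_neq_zero)

lemma embeds_swap:
  assumes "graph_embeds (Kab_vertices a b) (Kab_edges a b) P L"
  shows "graph_embeds (Kab_vertices b a) (Kab_edges b a) P L"
proof -
  obtain \<phi> where h: "\<phi> ` Kab_vertices a b \<subseteq> P" "inj_on \<phi> (Kab_vertices a b)"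
    "inj_on (\<lambda>e. line_through L (\<phi> ` e)) (Kab_edges a b)"
    using assms unfolding graph_embeds_def by blast
  define sw :: "nat + nat \<Rightarrow> nat + nat" where "sw = case_sum Inr Inl"
  have swsw: "sw (sw x) = x" for x by (cases x) (auto simp: sw_def)
  have V: "sw ` Kab_vertices b a = Kab_vertices a b"
    unfolding Kab_vertices_def sw_def by (auto simp: image_Un image_image)
  have E: "sw ` e \<in> Kab_edges a b" if "e \<in> Kab_edges b a" for e
    using that unfolding Kab_edges_def sw_def by (auto simp: insert_commute) blast
  have injsw: "inj sw" by (metis swsw injI)
  show ?thesis unfolding graph_embeds_def
  proof (intro exI[of _ "\<phi> \<circ> sw"] conjI)
    show "(\<phi> \<circ> sw) ` Kab_vertices b a \<subseteq> P" using h(1) V by (metis image_comp)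
    show "inj_on (\<phi> \<circ> sw) (Kab_vertices b a)"
      using h(2) V injsw by (metis comp_inj_on inj_on_subset subset_UNIV)
    show "inj_on (\<lambda>e. line_through L ((\<phi> \<circ> sw) ` e)) (Kab_edges b a)"
    proof (rule inj_onI)
      fix x y assume xy: "x \<in> Kab_edges b a" "y \<in> Kab_edges b a"
        "line_through L ((\<phi> \<circ> sw) ` x) = line_through L ((\<phi> \<circ> sw) ` y)"
      have "line_through L (\<phi> ` (sw ` x)) = line_through L (\<phi> ` (sw ` y))"
        using xy(3) by (simp add: image_comp)
      then have "sw ` x = sw ` y" using h(3) E[OF xy(1)] E[OF xy(2)]
        unfolding inj_on_def by blast
      then show "x = y" using injsw by (simp add: inj_image_eq_iff)
    qed
  qed
qed

lemma nec_setup: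
  assumes pp: "projective_plane P L q"
    and "\<phi> ` Kab_vertices a b \<subseteq> P" "inj_on \<phi> (Kab_vertices a b)"
    and "inj_on (\<lambda>e. line_through L (\<phi> ` e)) (Kab_edges a b)"
    and "j < b"
  shows "inj_on (\<lambda>i. line_through L {\<phi> (Inl i), \<phi> (Inr j)}) {..<a}
     \<and> (\<lambda>i. line_through L {\<phi> (Inl i), \<phi> (Inr j)}) ` {..<a} \<subseteq> {l\<in>L. \<phi> (Inr j) \<in> l}"
proof
  show "inj_on (\<lambda>i. line_through L {\<phi> (Inl i), \<phi> (Inr j)}) {..<a}"
  proof (rule inj_onI)
    fix i i' assume ii: "i \<in> {..<a}" "i' \<in> {..<a}"
      "line_through L {\<phi> (Inl i), \<phi> (Inr j)} = line_through L {\<phi> (Inl i'), \<phi> (Inr j)}"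
    have "{Inl i, Inr j} \<in> Kab_edges a b" "{Inl i', Inr j} \<in> Kab_edges a b"
      using ii assms(5) unfolding Kab_edges_def by auto
    then have "{Inl i, Inr j} = ({Inl i', Inr j} :: (nat+nat) set)"
      using assms(4) ii(3) unfolding inj_on_def by auto
    then show "i = i'" by (auto simp: doubleton_eq_iff)
  qed
  show "(\<lambda>i. line_through L {\<phi> (Inl i), \<phi> (Inr j)}) ` {..<a} \<subseteq> {l\<in>L. \<phi> (Inr j) \<in> l}"
  proof
    fix l assume "l \<in> (\<lambda>i. line_through L {\<phi> (Inl i), \<phi> (Inr j)}) ` {..<a}"
    then obtain i where i: "i < a" "l = line_through L {\<phi> (Inl i), \<phi> (Inr j)}" by auto
    have V: "Inl i \<in> Kab_vertices a b" "Inr j \<in> Kab_vertices a b"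
      using i assms(5) unfolding Kab_vertices_def by auto
    then have "\<phi> (Inl i) \<noteq> \<phi> (Inr j)" using assms(3) unfolding inj_on_def by fastforce
    then show "l \<in> {l\<in>L. \<phi> (Inr j) \<in> l}" using pp_line[OF pp, of "\<phi> (Inl i)" "\<phi> (Inr j)"] V assms(2) i
      by auto
  qed
qed

lemma pp_pencil: "projective_plane P L q \<Longrightarrow> x \<in> P \<Longrightarrow> card {l\<in>L. x \<in> l} = q + 1"
  by (rule ppD(7))

lemma nec1:
  assumes pp: "projective_plane P L q" and "graph_embeds (Kab_vertices a b) (Kab_edges a b) P L"
    and "b > 0"
  shows "a \<le> q + 1"
proof -
  obtain \<phi> where h: "\<phi> ` Kab_vertices a b \<subseteq> P" "inj_on \<phi> (Kab_vertices a b)"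
    "inj_on (\<lambda>e. line_through L (\<phi> ` e)) (Kab_edges a b)"
    using assms unfolding graph_embeds_def by blast
  note s = nec_setup[OF pp h assms(3)]
  have vP: "\<phi> (Inr 0) \<in> P" using h(1) assms(3) unfolding Kab_vertices_def by auto
  have "card {..<a} \<le> card {l\<in>L. \<phi> (Inr 0) \<in> l}"
    using s pp_finL[OF pp] by (intro card_inj_on_le) auto
  then show ?thesis using ppD(7)[OF pp vP] by simp
qed

lemma nec2:
  assumes pp: "projective_plane P L q" and "graph_embeds (Kab_vertices a b) (Kab_edges a b) P L"
    and "a = q + 1" and "1 < b"
  shows False
proof -
  obtain \<phi> where h: "\<phi> ` Kab_vertices a b \<subseteq> P" "inj_on \<phi> (Kab_vertices a b)"
    "inj_on (\<lambda>e. line_through L (\<phi> ` e)) (Kab_edges a b)"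
    using assms unfolding graph_embeds_def by blast
  define f where "f = (\<lambda>i. line_through L {\<phi> (Inl i), \<phi> (Inr 0)})"
  define S where "S = {l\<in>L. \<phi> (Inr 0) \<in> l}"
  have s: "inj_on f {..<a}" "f ` {..<a} \<subseteq> S"
    using nec_setup[OF pp h, of 0] assms(4) unfolding f_def S_def by auto
  have V0: "Inr 0 \<in> Kab_vertices a b" and V1: "Inr 1 \<in> Kab_vertices a b"
    using assms(4) unfolding Kab_vertices_def by auto
  have vP: "\<phi> (Inr 0) \<in> P" and wP: "\<phi> (Inr 1) \<in> P" using h(1) V0 V1 by auto
  have vw: "\<phi> (Inr 0) \<noteq> \<phi> (Inr 1)" using inj_onD[OF h(2) _ V0 V1] by auto
  have finS: "finite S" using pp_finL[OF pp] unfolding S_def by auto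
  have "card (f ` {..<a}) = card S"
    using s(1) pp_pencil[OF pp vP] assms(3) unfolding S_def by (simp add: card_image)
  then have fS: "f ` {..<a} = S" using card_subset_eq[OF finS s(2)] by simp
  define n where "n = line_through L {\<phi> (Inr 0), \<phi> (Inr 1)}"
  have n: "n \<in> L" "\<phi> (Inr 0) \<in> n" "\<phi> (Inr 1) \<in> n"
    using pp_line[OF pp vP wP vw] unfolding n_def by auto
  then have "n \<in> S" unfolding S_def by auto
  then obtain i where i: "i < a" "f i = n" using fS by auto
  have Vi: "Inl i \<in> Kab_vertices a b" using i unfolding Kab_vertices_def by auto
  have xP: "\<phi> (Inl i) \<in> P" using h(1) Vi by auto
  have xv: "\<phi> (Inl i) \<noteq> \<phi> (Inr 0)" and xw: "\<phi> (Inl i) \<noteq> \<phi> (Inr 1)"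
    using inj_onD[OF h(2) _ Vi V0] inj_onD[OF h(2) _ Vi V1] by auto
  have "\<phi> (Inl i) \<in> n" using pp_line[OF pp xP vP xv] i unfolding f_def by auto
  then have e1: "line_through L {\<phi> (Inl i), \<phi> (Inr 1)} = n"
    using pp_line_eq[OF pp xP wP xw n(1)] n by auto
  have e0: "line_through L {\<phi> (Inl i), \<phi> (Inr 0)} = n" using i unfolding f_def by simp
  have E0: "{Inl i, Inr 0} \<in> Kab_edges a b"
    unfolding Kab_edges_def using i assms(4) by (intro CollectI exI[of _ i] exI[of _ "0::nat"] conjI) simp_all
  have E1: "{Inl i, Inr 1} \<in> Kab_edges a b"
    unfolding Kab_edges_def using i assms(4) by (intro CollectI exI[of _ i] exI[of _ "1::nat"] conjI) simp_all
  note E = E0 E1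
  have "{Inl i, Inr 0} = ({Inl i, Inr 1} :: (nat+nat) set)"
    using inj_onD[OF h(3) _ E(1) E(2)] e0 e1 by simp
  then show False by (auto simp: doubleton_eq_iff)
qed

lemma suff1:
  assumes pp: "projective_plane P L q" and "a \<le> q" "b \<le> q"
  shows "graph_embeds (Kab_vertices a b) (Kab_edges a b) P L"
proof -
  have finL: "finite L" using pp_finL[OF pp] .
  have cL: "card L = q^2+q+1" "q \<ge> 2" using ppD(4,1)[OF pp] by auto
  then have "\<not> card L \<le> Suc 0" by simp
  then obtain l m where lm: "l \<in> L" "m \<in> L" "l \<noteq> m" using card_le_Suc0_iff_eq[OF finL] by blast
  have lP: "l \<subseteq> P" "card l = q+1" "m \<subseteq> P" "card m = q+1"
    using ppD(5,6)[OF pp] lm by auto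
  have finP: "finite P" using ppD(2)[OF pp] .
  obtain z0 where z0: "z0 \<in> P" "z0 \<in> l" "z0 \<in> m" using ppD(9)[OF pp lm] by blast
  have fl: "finite (l - {z0})" "finite (m - {z0})" using lP finP finite_subset by auto
  have cl: "card (l - {z0}) = q" "card (m - {z0}) = q" using lP z0 fl by (auto simp: card_Diff_singleton)
  obtain f where f: "bij_betw f {0..<q} (l - {z0})" using ex_bij_betw_nat_finite[OF fl(1)] cl by auto
  obtain g where g: "bij_betw g {0..<q} (m - {z0})" using ex_bij_betw_nat_finite[OF fl(2)] cl by auto
  have fi: "f i \<in> l - {z0}" if "i < q" for i using f that unfolding bij_betw_def by auto
  have gi: "g i \<in> m - {z0}" if "i < q" for i using g that unfolding bij_betw_def by auto
  have finj: "f i = f i' \<Longrightarrow> i < q \<Longrightarrow> i' < q \<Longrightarrow> i = i'" for i i'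
    using f unfolding bij_betw_def inj_on_def by auto
  have ginj: "g i = g i' \<Longrightarrow> i < q \<Longrightarrow> i' < q \<Longrightarrow> i = i'" for i i'
    using g unfolding bij_betw_def inj_on_def by auto
  have fg: "f i \<noteq> g j" if "i < q" "j < q" for i j
  proof
    assume "f i = g j"
    then have "f i = z0" using pp_meet[OF pp lm, of "f i" z0] fi[OF that(1)] gi[OF that(2)] z0 lP by auto
    then show False using fi[OF that(1)] by auto
  qed
  define \<phi> where "\<phi> = case_sum f g"
  show ?thesis unfolding graph_embeds_def
  proof (intro exI[of _ \<phi>] conjI)
    show "\<phi> ` Kab_vertices a b \<subseteq> P"
      using fi gi lP assms unfolding \<phi>_def Kab_vertices_def by fastforce
    show "inj_on \<phi> (Kab_vertices a b)"
    proof (rule inj_onI)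
      fix u v assume uv: "u \<in> Kab_vertices a b" "v \<in> Kab_vertices a b" "\<phi> u = \<phi> v"
      have A: "\<And>i. Inl i \<in> Kab_vertices a b \<Longrightarrow> i < q" "\<And>j. Inr j \<in> Kab_vertices a b \<Longrightarrow> j < q"
        using assms unfolding Kab_vertices_def by auto
      show "u = v"
      proof (cases u; cases v)
        fix i i' assume "u = Inl i" "v = Inl i'" then show ?thesis using uv A finj unfolding \<phi>_def by auto
      next
        fix i i' assume "u = Inl i" "v = Inr i'" then show ?thesis using uv A fg unfolding \<phi>_def by auto
      next
        fix i i' assume "u = Inr i" "v = Inl i'" then show ?thesis using uv A fg unfolding \<phi>_def by (metis sum.simps(5,6))
      next
        fix i i' assume "u = Inr i" "v = Inr i'" then show ?thesis using uv A ginj unfolding \<phi>_def by auto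
      qed
    qed
    show "inj_on (\<lambda>e. line_through L (\<phi> ` e)) (Kab_edges a b)"
    proof (rule inj_onI)
      fix e1 e2 assume E: "e1 \<in> Kab_edges a b" "e2 \<in> Kab_edges a b"
        and eq: "line_through L (\<phi> ` e1) = line_through L (\<phi> ` e2)"
      obtain i j where ij: "e1 = {Inl i, Inr j}" "i < q" "j < q"
        using E(1) assms unfolding Kab_edges_def by auto
      obtain i' j' where ij': "e2 = {Inl i', Inr j'}" "i' < q" "j' < q"
        using E(2) assms unfolding Kab_edges_def by auto
      define n where "n = line_through L {f i, g j}"
      have P1: "f i \<in> P" "g j \<in> P" "f i' \<in> P" "g j' \<in> P" using fi gi ij ij' lP by auto
      have n: "n \<in> L" "f i \<in> n" "g j \<in> n" using pp_line[OF pp P1(1,2) fg[OF ij(2,3)]] n_def by auto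
      have nn: "line_through L {f i', g j'} = n" using eq ij ij' unfolding n_def \<phi>_def by simp
      have n': "n \<in> L" "f i' \<in> n" "g j' \<in> n"
        using pp_line[OF pp P1(3,4) fg[OF ij'(2,3)]] unfolding nn by auto
      have nl: "n \<noteq> l"
      proof
        assume "n = l"
        then have "g j = z0" using pp_meet[OF pp lm, of "g j" z0] n gi[OF ij(3)] z0 P1 by auto
        then show False using gi[OF ij(3)] by auto
      qed
      have nm: "n \<noteq> m"
      proof
        assume "n = m"
        then have "f i = z0" using pp_meet[OF pp lm, of "f i" z0] n fi[OF ij(2)] z0 P1 by auto
        then show False using fi[OF ij(2)] by auto
      qed
      have "f i = f i'" using pp_meet[OF pp n(1) lm(1) nl, of "f i" "f i'"] n n' P1 fi ij ij' by auto
      then have "i = i'" using finj ij ij' by auto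
      have "g j = g j'" using pp_meet[OF pp n(1) lm(2) nm, of "g j" "g j'"] n n' P1 gi ij ij' by auto
      then have "j = j'" using ginj ij ij' by auto
      then show "e1 = e2" unfolding ij(1) ij'(1) using \<open>i = i'\<close> by (simp only:)
    qed
  qed
qed

lemma suff2:
  assumes pp: "projective_plane P L q"
  shows "graph_embeds (Kab_vertices 1 (q+1)) (Kab_edges 1 (q+1)) P L"
proof -
  have finP: "finite P" and cP: "card P = q^2+q+1" and q2: "q \<ge> 2"
    using ppD[OF pp] by auto
  then obtain x where x: "x \<in> P" by (metis all_not_in_conv card.empty add_is_0 one_neq_zero)
  define S where "S = {l\<in>L. x \<in> l}"
  have finS: "finite S" using pp_finL[OF pp] unfolding S_def by auto
  obtain g where g: "bij_betw g {0..<q+1} S"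
    using ex_bij_betw_nat_finite[OF finS] pp_pencil[OF pp x] unfolding S_def by auto
  have gS: "g j \<in> L" "x \<in> g j" if "j < q+1" for j using g that unfolding bij_betw_def S_def by auto
  have ginj: "g i = g i' \<Longrightarrow> i < q+1 \<Longrightarrow> i' < q+1 \<Longrightarrow> i = i'" for i i'
    using g unfolding bij_betw_def inj_on_def by auto
  have ex: "\<exists>y. y \<in> l \<and> y \<noteq> x" if "l \<in> L" for l
  proof (rule ccontr)
    assume "\<not> ?thesis" then have "l \<subseteq> {x}" by auto
    then have "card l \<le> 1" by (metis card_mono finite.emptyI finite.insertI card.insert card.empty insert_absorb empty_iff One_nat_def)
    moreover have "card l = q+1" using ppD(6)[OF pp that] .
    ultimately show False using q2 by simp
  qed
  define h where "h l = (SOME y. y \<in> l \<and> y \<noteq> x)" for l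
  have h: "h l \<in> l" "h l \<noteq> x" if "l \<in> L" for l
    using someI_ex[OF ex[OF that]] unfolding h_def by auto
  have lP: "l \<subseteq> P" if "l \<in> L" for l using ppD(5)[OF pp that] .
  have hP: "h (g j) \<in> P" if "j < q+1" for j using h gS lP that by blast
  have hinj: "j = j'" if "h (g j) = h (g j')" "j < q+1" "j' < q+1" for j j'
  proof (rule ccontr)
    assume "j \<noteq> j'"
    then have "g j \<noteq> g j'" using g that unfolding bij_betw_def inj_on_def by auto
    then have "x = h (g j)" using pp_meet[OF pp gS(1)[OF that(2)] gS(1)[OF that(3)]] that x hP h gS
      by metis
    then show False using h gS that by metis
  qed
  define \<phi> where "\<phi> = case_sum (\<lambda>_::nat. x) (\<lambda>j. h (g j))"
  show ?thesis unfolding graph_embeds_def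
  proof (intro exI[of _ \<phi>] conjI)
    show "\<phi> ` Kab_vertices 1 (q+1) \<subseteq> P"
      using x hP unfolding \<phi>_def Kab_vertices_def by auto
    show "inj_on \<phi> (Kab_vertices 1 (q+1))"
      unfolding inj_on_def Kab_vertices_def \<phi>_def
      using hinj h gS by (auto; metis)
    show "inj_on (\<lambda>e. line_through L (\<phi> ` e)) (Kab_edges 1 (q+1))"
    proof (rule inj_onI)
      fix e1 e2 assume E: "e1 \<in> Kab_edges 1 (q+1)" "e2 \<in> Kab_edges 1 (q+1)"
        and eq: "line_through L (\<phi> ` e1) = line_through L (\<phi> ` e2)"
      obtain j where j: "e1 = {Inl 0, Inr j}" "j < q+1"
        using E(1) unfolding Kab_edges_def by auto
      obtain j' where j': "e2 = {Inl 0, Inr j'}" "j' < q+1"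
        using E(2) unfolding Kab_edges_def by auto
      have l1: "line_through L (\<phi> ` e1) = g j"
        using pp_line_eq[OF pp x hP[OF j(2)] _ gS(1)[OF j(2)] gS(2)[OF j(2)] h(1)[OF gS(1)[OF j(2)]]]
          h(2)[OF gS(1)[OF j(2)]] j(1) unfolding \<phi>_def by auto
      have l2: "line_through L (\<phi> ` e2) = g j'"
        using pp_line_eq[OF pp x hP[OF j'(2)] _ gS(1)[OF j'(2)] gS(2)[OF j'(2)] h(1)[OF gS(1)[OF j'(2)]]]
          h(2)[OF gS(1)[OF j'(2)]] j'(1) unfolding \<phi>_def by auto
      have "j = j'" using ginj l1 l2 eq j j' by auto
      then show "e1 = e2" using j j' by simp
    qed
  qed
qed

theorem theorem3p2:
  fixes P :: "'p set" and L :: "'p set set" and q a b :: nat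
  assumes "projective_plane P L q" and "a > 0" and "b > 0"
  shows "graph_embeds (Kab_vertices a b) (Kab_edges a b) P L \<longleftrightarrow>
           ((a \<le> q \<and> b \<le> q) \<or> {a, b} = {1, q + 1})"
proof
  assume e: "graph_embeds (Kab_vertices a b) (Kab_edges a b) P L"
  have e': "graph_embeds (Kab_vertices b a) (Kab_edges b a) P L" using embeds_swap[OF e] .
  have "a \<le> q+1" using nec1[OF assms(1) e assms(3)] .
  moreover have "b \<le> q+1" using nec1[OF assms(1) e' assms(2)] .
  moreover have "a = q+1 \<Longrightarrow> b = 1" using nec2[OF assms(1) e] assms(3) by fastforce
  moreover have "b = q+1 \<Longrightarrow> a = 1" using nec2[OF assms(1) e'] assms(2) by fastforce
  ultimately show "(a \<le> q \<and> b \<le> q) \<or> {a, b} = {1, q + 1}"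
    by (cases "a = q+1"; cases "b = q+1") (auto simp: insert_commute)
next
  assume "(a \<le> q \<and> b \<le> q) \<or> {a, b} = {1, q + 1}"
  then show "graph_embeds (Kab_vertices a b) (Kab_edges a b) P L"
  proof
    assume "a \<le> q \<and> b \<le> q" then show ?thesis using suff1[OF assms(1)] by auto
  next
    assume "{a, b} = {1, q + 1}"
    then have "(a = 1 \<and> b = q+1) \<or> (a = q+1 \<and> b = 1)" by (auto simp: doubleton_eq_iff)
    then show ?thesis using suff2[OF assms(1)] embeds_swap by auto
  qed
qed

end
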